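(* Let $\mathcal{A}=\mathcal{R}*_K\mathcal{S}*_L\mathcal{T}\in\mathbb{C}^{I_1\times\cdots\times I_N\times J_1\times\cdots\times J_M}$, where $\mathcal{R}\in\mathbb{C}^{I_1\times\cdots\times I_N\times H_1\times\cdots\times H_K}$, $\mathcal{S}\in\mathbb{C}^{H_1\times\cdots\times H_K\times G_1\times\cdots\times G_L}$ and $\mathcal{T}\in\mathbb{C}^{G_1\times\cdots\times G_L\times J_1\times\cdots\times J_M}$. Then $$\mathcal{A}_{\pi\dagger}=\mathcal{T}^{\dagger}*_L(\mathcal{A}*_M\mathcal{T}^{\dagger})^{\dagger}*_N\mathcal{A}*_M(\mathcal{R}^{\dagger}*_N\mathcal{A})^{\dagger}*_K\mathcal{R}^{\dagger},$$ and $\mathcal{A}_{\pi\dagger}$ is the unique tensor $\mathcal{X}\in\mathbb{C}^{J_1\times\cdots\times J_M\times I_1\times\cdots\times I_N}$ such that $\mathcal{X}*_N\mathcal{A}*_M\mathcal{X}=\mathcal{X}$, $\mathcal{A}*_M\mathcal{X}=\mathcal{A}*_M(\mathcal{R}^{\dagger}*_N\mathcal{A})^{\dagger}*_K\mathcal{R}^{\dagger}$ and $\mathcal{X}*_N\mathcal{A}=\mathcal{T}^{\dagger}*_L(\mathcal{A}*_M\mathcal{T}^{\dagger})^{\dagger}*_N\mathcal{A}$.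
   Context: $\mathbb{C}^{I_1\times\cdots\times I_N}$ denotes the set of complex tensors of order $N$ and dimension $I_1\times\cdots\times I_N$. For $\mathcal{A}\in\mathbb{C}^{I_1\times\cdots\times I_N\times K_1\times\cdots\times K_N}$ and $\mathcal{B}\in\mathbb{C}^{K_1\times\cdots\times K_N\times J_1\times\cdots\times J_M}$, the Einstein product $\mathcal{A}*_N\mathcal{B}$ is defined by $(\mathcal{A}*_N\mathcal{B})_{i_1\dots i_N j_1\dots j_M}=\sum_{k_1,\dots,k_N}a_{i_1\dots i_N k_1\dots k_N}b_{k_1\dots k_N j_1\dots j_M}$; it is associative. $\mathcal{A}^H$ denotes the conjugate transpose (swap the two groups of indices and conjugate entries). For $\mathcal{A}\in\mathbb{C}^{I_1\times\cdots\times I_N\times J_1\times\cdots\times J_M}$ the Moore–Penrose inverse $\mathcal{A}^{\dagger}$ is the unique $\mathcal{X}\in\mathbb{C}^{J_1\times\cdots\times J_M\times I_1\times\cdots\times I_N}$ with $\mathcal{A}*_M\mathcal{X}*_N\mathcal{A}=\mathcal{A}$, $\mathcal{X}*_N\mathcal{A}*_M\mathcal{X}=\mathcal{X}$, $(\mathcal{A}*_M\mathcal{X})^H=\mathcal{A}*_M\mathcal{X}$, $(\mathcal{X}*_N\mathcal{A})^H=\mathcal{X}*_N\mathcal{A}$. Given the factorization $\mathcal{A}=\mathcal{R}*_K\mathcal{S}*_L\mathcal{T}$ as in the claim, the product Moore–Penrose inverse of $\mathcal{A}$ (relative to this factorization) is $\mathcal{A}_{\pi\dagger}=\mathcal{T}^{\dagger}*_L(\mathcal{R}^{\dagger}*_N\mathcal{A}*_M\mathcal{T}^{\dagger})^{\dagger}*_K\mathcal{R}^{\dagger}$.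 *)

theory Defs
  imports Complex_Main
begin

text \<open>A complex tensor in C^(I_1 x ... x I_N x J_1 x ... x J_M) is represented as a
function of two grouped multi-indices: the first group ranges over the finite type 'i
(standing for the index set I_1 x ... x I_N), the second over the finite type 'j
(standing for J_1 x ... x J_M).  All notions used (Einstein product, conjugate
transpose, Moore-Penrose inverse) only depend on this grouping.\<close>

type_synonym ('i, 'j) tensor = "'i \<Rightarrow> 'j \<Rightarrow> complex"

definition einstein :: "('i, 'k::finite) tensor \<Rightarrow> ('k, 'j) tensor \<Rightarrow> ('i, 'j) tensor"
  (infixl "\<star>" 70) where
  "A \<star> B = (\<lambda>i j. \<Sum>k\<in>UNIV. A i k * B k j)"

definition ctrans :: "('i, 'j) tensor \<Rightarrow> ('j, 'i) tensor" where
  "ctrans A = (\<lambda>j i. cnj (A i j))"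

definition is_mp_inverse :: "('i::finite, 'j::finite) tensor \<Rightarrow> ('j, 'i) tensor \<Rightarrow> bool" where
  "is_mp_inverse A X \<longleftrightarrow>
     A \<star> X \<star> A = A \<and> X \<star> A \<star> X = X \<and>
     ctrans (A \<star> X) = A \<star> X \<and> ctrans (X \<star> A) = X \<star> A"

definition mp_inv :: "('i::finite, 'j::finite) tensor \<Rightarrow> ('j, 'i) tensor" where
  "mp_inv A = (THE X. is_mp_inverse A X)"

definition prod_mp_inv ::
  "('i::finite, 'h::finite) tensor \<Rightarrow> ('i, 'j::finite) tensor \<Rightarrow> ('g::finite, 'j) tensor
     \<Rightarrow> ('j, 'i) tensor" where
  "prod_mp_inv R A T = mp_inv T \<star> mp_inv (mp_inv R \<star> A \<star> mp_inv T) \<star> mp_inv R"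

end

theory Submission imports Defs "HOL-Library.Function_Algebras" begin

lemma ein_assoc: "(P \<star> Q) \<star> W = P \<star> (Q \<star> W)"
  unfolding einstein_def
  apply (rule ext)+
  apply (simp add: sum_distrib_left sum_distrib_right mult.assoc)
  apply (rule sum.swap)
  done

lemma ctrans_ein: "ctrans (P \<star> Q) = ctrans Q \<star> ctrans P"
  unfolding einstein_def ctrans_def by (simp add: fun_eq_iff mult.commute)

lemma ctrans_ctrans[simp]: "ctrans (ctrans P) = P"
  unfolding ctrans_def by simp

lemma ctrans_inj: "ctrans P = ctrans Q \<Longrightarrow> P = Q"
  by (metis ctrans_ctrans)

lemma ein_diff_right: "P \<star> (Q - W) = P \<star> Q - P \<star> W"
  unfolding einstein_def by (simp add: fun_eq_iff right_diff_distrib sum_subtractf)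

lemma ein_zero_right[simp]: "P \<star> 0 = 0"
  unfolding einstein_def by (simp add: fun_eq_iff)

lemma gram_zero:
  fixes E :: "('i::finite, 'j) tensor"
  assumes "ctrans E \<star> E = 0" shows "E = 0"
proof -
  have "\<forall>i. E i j = 0" for j
  proof -
    have "(\<Sum>i\<in>UNIV. cnj (E i j) * E i j) = 0"
      using fun_cong[OF fun_cong[OF assms, of j], of j] by (simp add: einstein_def ctrans_def)
    then have "(\<Sum>i\<in>UNIV. complex_of_real ((cmod (E i j))^2)) = 0"
      by (simp only: complex_norm_square mult.commute)
    then have "(\<Sum>i\<in>UNIV. (cmod (E i j))^2) = 0"
      by (metis of_real_sum of_real_eq_0_iff)
    then have "\<forall>i\<in>UNIV. (cmod (E i j))^2 = 0"
      by (subst sum_nonneg_eq_0_iff[symmetric]) auto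
    thus ?thesis by simp
  qed
  thus ?thesis by (simp add: fun_eq_iff)
qed

lemma cancel_left:
  fixes A :: "('i::finite, 'j::finite) tensor"
  assumes "ctrans A \<star> A \<star> P = ctrans A \<star> A \<star> Q" shows "A \<star> P = A \<star> Q"
proof -
  let ?E = "A \<star> (P - Q)"
  have 1: "ctrans A \<star> ?E = 0" using assms by (simp add: ein_diff_right ein_assoc)
  have "ctrans ?E \<star> ?E = ctrans (P - Q) \<star> (ctrans A \<star> ?E)"
    by (simp add: ctrans_ein ein_assoc)
  also have "\<dots> = 0" using 1 by simp
  finally have "?E = 0" by (rule gram_zero)
  thus ?thesis by (simp add: ein_diff_right)
qed

lemma cancel_right:
  fixes A :: "('i::finite, 'j::finite) tensor"
  assumes "P \<star> A \<star> ctrans A = Q \<star> A \<star> ctrans A" shows "P \<star> A = Q \<star> A"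
proof -
  have "ctrans (ctrans A) \<star> ctrans A \<star> ctrans P = ctrans (ctrans A) \<star> ctrans A \<star> ctrans Q"
    using arg_cong[OF assms, of ctrans] by (simp add: ctrans_ein ein_assoc)
  hence "ctrans A \<star> ctrans P = ctrans A \<star> ctrans Q" by (rule cancel_left)
  hence "ctrans (P \<star> A) = ctrans (Q \<star> A)" by (simp add: ctrans_ein)
  thus ?thesis by (rule ctrans_inj)
qed

lemma sum_apply: "(sum f A) x = (\<Sum>a\<in>A. f a x)"
  by (induction A rule: infinite_finite_induct) auto

lemma mydelta: "(w::complex) * (if P then 1 else 0) = (if P then w else 0)"
  by simp

definition smul :: "complex \<Rightarrow> ('a \<Rightarrow> complex) \<Rightarrow> ('a \<Rightarrow> complex)" where
  "smul c v = (\<lambda>x. c * v x)"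

lemma vs_smul: "vector_space smul"
  by unfold_locales (simp_all add: smul_def fun_eq_iff ring_distribs)

lemma one_inverse:
  fixes M :: "('i::finite, 'j::finite) tensor"
  shows "\<exists>G. M \<star> G \<star> M = M"
proof -
  define f where "f = (\<lambda>v::'j\<Rightarrow>complex. \<lambda>i. \<Sum>j\<in>UNIV. M i j * v j)"
  have lin: "Vector_Spaces.linear smul smul f" unfolding Vector_Spaces.linear_iff
    by (simp add: vs_smul f_def smul_def fun_eq_iff distrib_left sum.distrib sum_distrib_left mult.left_commute)
  interpret vp: vector_space_pair "smul :: complex \<Rightarrow> ('j\<Rightarrow>complex) \<Rightarrow> _" "smul :: complex \<Rightarrow> ('i\<Rightarrow>complex) \<Rightarrow> _"
    by (simp add: vector_space_pair_def vs_smul)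
  obtain g where glin: "Vector_Spaces.linear smul smul g" and gf: "\<forall>v\<in>f ` UNIV. f (g v) = v"
    using vp.linear_exists_right_inverse_on[OF lin vp.vs1.subspace_UNIV] by auto
  interpret gh: module_hom "smul :: complex \<Rightarrow> ('i\<Rightarrow>complex) \<Rightarrow> _" "smul :: complex \<Rightarrow> ('j\<Rightarrow>complex) \<Rightarrow> _" g
    using glin by (simp add: linear_iff_module_hom)
  define G where "G = (\<lambda>j i. g (\<lambda>i'. if i' = i then 1 else 0) j)"
  have gsum: "g w j = (\<Sum>i\<in>UNIV. G j i * w i)" for w j
  proof -
    have "w = (\<Sum>i\<in>UNIV. smul (w i) (\<lambda>i'. if i' = i then 1 else 0))"
      by (simp add: fun_eq_iff smul_def sum_apply mydelta)
    hence "g w = (\<Sum>i\<in>UNIV. smul (w i) (g (\<lambda>i'. if i' = i then 1 else 0)))"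
      by (metis (no_types, lifting) gh.scale gh.sum sum.cong)
    thus ?thesis by (simp add: sum_apply smul_def G_def mult.commute)
  qed
  have "M \<star> G \<star> M = M"
  proof (rule ext, rule ext)
    fix i j
    have col: "(\<lambda>k. M k j) = f (\<lambda>j'. if j' = j then 1 else 0)"
      by (simp add: f_def fun_eq_iff mydelta)
    have "(M \<star> G \<star> M) i j = f (g (\<lambda>k. M k j)) i"
      unfolding ein_assoc by (simp add: einstein_def f_def gsum)
    also have "\<dots> = M i j" using gf col by (metis rangeI)
    finally show "(M \<star> G \<star> M) i j = M i j" .
  qed
  thus ?thesis by blast
qed


definition idt :: "('i, 'i) tensor" where "idt = (\<lambda>i j. if i = j then 1 else 0)"

lemma ein_id_right[simp]: "A \<star> idt = A"
  unfolding einstein_def idt_def by (simp add: fun_eq_iff mydelta)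

lemma mydelta2: "(if P then 1 else 0) * (w::complex) = (if P then w else 0)"
  by simp

lemma ein_id_left[simp]: "idt \<star> A = A"
  unfolding einstein_def idt_def by (simp add: fun_eq_iff mydelta2)

lemma rmul: "X = W \<Longrightarrow> X \<star> Z = W \<star> Z" by simp
lemma lmul: "X = W \<Longrightarrow> Z \<star> X = Z \<star> W" by simp

lemma mp_unique:
  fixes A :: "('i::finite, 'j::finite) tensor"
  assumes 1: "is_mp_inverse A X1" and 2: "is_mp_inverse A X2"
  shows "X1 = X2"
proof -
  from 1 have a1: "A \<star> X1 \<star> A = A" "X1 \<star> A \<star> X1 = X1" "ctrans (A \<star> X1) = A \<star> X1" "ctrans (X1 \<star> A) = X1 \<star> A"
    unfolding is_mp_inverse_def by auto
  from 2 have a2: "A \<star> X2 \<star> A = A" "X2 \<star> A \<star> X2 = X2" "ctrans (A \<star> X2) = A \<star> X2" "ctrans (X2 \<star> A) = X2 \<star> A"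
    unfolding is_mp_inverse_def by auto
  have AX: "A \<star> X1 = A \<star> X2"
  proof -
    have "A \<star> X1 = (A \<star> X2 \<star> A) \<star> X1" using a2(1) by simp
    also have "\<dots> = ctrans (A \<star> X2) \<star> ctrans (A \<star> X1)" using a1(3) a2(3) by (simp add: ein_assoc)
    also have "\<dots> = ctrans (A \<star> X1 \<star> A \<star> X2)" by (simp add: ctrans_ein ein_assoc)
    also have "\<dots> = A \<star> X2" using a1(1) a2(3) by simp
    finally show ?thesis .
  qed
  have XA: "X1 \<star> A = X2 \<star> A"
  proof -
    have "X1 \<star> A = X1 \<star> (A \<star> X2 \<star> A)" using a2(1) by simp
    also have "\<dots> = ctrans (X1 \<star> A) \<star> ctrans (X2 \<star> A)" using a1(4) a2(4) by (simp add: ein_assoc)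
    also have "\<dots> = ctrans (X2 \<star> A \<star> X1 \<star> A)" by (simp add: ctrans_ein ein_assoc)
    also have "\<dots> = X2 \<star> A" using a1(1) a2(4) by (simp add: ein_assoc)
    finally show ?thesis .
  qed
  have "X1 = X1 \<star> A \<star> X1" using a1(2) by simp
  also have "\<dots> = X2 \<star> (A \<star> X1)" using XA by (simp add: ein_assoc)
  also have "\<dots> = X2" using AX a2(2) by (simp add: ein_assoc)
  finally show ?thesis .
qed

lemma mp_exists:
  fixes A :: "('i::finite, 'j::finite) tensor"
  shows "\<exists>X. is_mp_inverse A X"
proof -
  obtain G1 where g1: "ctrans A \<star> A \<star> G1 \<star> (ctrans A \<star> A) = ctrans A \<star> A"
    using one_inverse by blast
  obtain G2 where g2: "A \<star> ctrans A \<star> G2 \<star> (A \<star> ctrans A) = A \<star> ctrans A"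
    using one_inverse by blast
  have "ctrans A \<star> A \<star> (G1 \<star> ctrans A \<star> A) = ctrans A \<star> A \<star> idt"
    using g1 by (simp add: ein_assoc)
  hence "A \<star> (G1 \<star> ctrans A \<star> A) = A \<star> idt" by (rule cancel_left)
  hence AYA: "A \<star> G1 \<star> ctrans A \<star> A = A" by (simp add: ein_assoc)
  have "(A \<star> ctrans A \<star> G2) \<star> A \<star> ctrans A = idt \<star> A \<star> ctrans A"
    using g2 by (simp add: ein_assoc)
  hence "(A \<star> ctrans A \<star> G2) \<star> A = idt \<star> A" by (rule cancel_right)
  hence AZA: "A \<star> ctrans A \<star> G2 \<star> A = A" by (simp add: ein_assoc)
  have c1: "ctrans A \<star> A \<star> ctrans G1 \<star> ctrans A = ctrans A"
    using arg_cong[OF AYA, of ctrans] by (simp add: ctrans_ein ein_assoc)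
  have c2: "ctrans A \<star> ctrans G2 \<star> A \<star> ctrans A = ctrans A"
    using arg_cong[OF AZA, of ctrans] by (simp add: ctrans_ein ein_assoc)
  have hY: "ctrans (A \<star> G1 \<star> ctrans A) = A \<star> G1 \<star> ctrans A"
  proof -
    have "A \<star> G1 \<star> ctrans A = A \<star> G1 \<star> (ctrans A \<star> A \<star> ctrans G1 \<star> ctrans A)" using c1 by simp
    also have "\<dots> = (A \<star> G1 \<star> ctrans A \<star> A) \<star> ctrans G1 \<star> ctrans A" by (simp add: ein_assoc)
    also have "\<dots> = A \<star> ctrans G1 \<star> ctrans A" using AYA by simp
    finally show ?thesis by (simp add: ctrans_ein ein_assoc)
  qed
  have hZ: "ctrans (ctrans A \<star> G2 \<star> A) = ctrans A \<star> G2 \<star> A"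
  proof -
    have "ctrans A \<star> G2 \<star> A = (ctrans A \<star> ctrans G2 \<star> A \<star> ctrans A) \<star> G2 \<star> A" using c2 by simp
    also have "\<dots> = ctrans A \<star> ctrans G2 \<star> (A \<star> ctrans A \<star> G2 \<star> A)" by (simp add: ein_assoc)
    also have "\<dots> = ctrans A \<star> ctrans G2 \<star> A" using AZA by simp
    finally show ?thesis by (simp add: ctrans_ein ein_assoc)
  qed
  define Y where "Y = G1 \<star> ctrans A"
  define Z where "Z = ctrans A \<star> G2"
  have AYA': "A \<star> Y \<star> A = A" using AYA by (simp add: Y_def ein_assoc)
  have AZA': "A \<star> Z \<star> A = A" using AZA by (simp add: Z_def ein_assoc)
  have hY': "ctrans (A \<star> Y) = A \<star> Y" using hY by (simp add: Y_def ein_assoc)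
  have hZ': "ctrans (Z \<star> A) = Z \<star> A" using hZ by (simp add: Z_def ein_assoc)
  define X where "X = Z \<star> A \<star> Y"
  have "A \<star> X \<star> A = A"
  proof -
    have "A \<star> X \<star> A = (A \<star> Z \<star> A) \<star> Y \<star> A" by (simp add: X_def ein_assoc)
    also have "\<dots> = A" using AZA' AYA' by (simp add: ein_assoc)
    finally show ?thesis .
  qed
  moreover have "X \<star> A \<star> X = X"
  proof -
    have "X \<star> A \<star> X = Z \<star> (A \<star> Y \<star> A) \<star> Z \<star> A \<star> Y" by (simp add: X_def ein_assoc)
    also have "\<dots> = Z \<star> (A \<star> Z \<star> A) \<star> Y" using AYA' by (simp add: ein_assoc)
    also have "\<dots> = X" using AZA' by (simp add: X_def ein_assoc)
    finally show ?thesis .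
  qed
  moreover have "A \<star> X = A \<star> Y"
  proof -
    have "A \<star> X = (A \<star> Z \<star> A) \<star> Y" by (simp add: X_def ein_assoc)
    thus ?thesis using AZA' by simp
  qed
  moreover have "X \<star> A = Z \<star> A"
  proof -
    have "X \<star> A = Z \<star> (A \<star> Y \<star> A)" by (simp add: X_def ein_assoc)
    thus ?thesis using AYA' by simp
  qed
  ultimately have "is_mp_inverse A X" using hY' hZ' unfolding is_mp_inverse_def by simp
  thus ?thesis by blast
qed

lemma mp_inv_props:
  fixes A :: "('i::finite, 'j::finite) tensor"
  shows "A \<star> mp_inv A \<star> A = A" "mp_inv A \<star> A \<star> mp_inv A = mp_inv A"
    "ctrans (A \<star> mp_inv A) = A \<star> mp_inv A" "ctrans (mp_inv A \<star> A) = mp_inv A \<star> A"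
proof -
  have ex1: "\<exists>!X. is_mp_inverse A X"
  proof (rule ex_ex1I)
    show "\<exists>X. is_mp_inverse A X" by (rule mp_exists)
  next
    fix x y assume "is_mp_inverse A x" "is_mp_inverse A y"
    thus "x = y" by (rule mp_unique)
  qed
  have "is_mp_inverse A (mp_inv A)"
    unfolding mp_inv_def using ex1 by (rule theI')
  thus "A \<star> mp_inv A \<star> A = A" "mp_inv A \<star> A \<star> mp_inv A = mp_inv A"
    "ctrans (A \<star> mp_inv A) = A \<star> mp_inv A" "ctrans (mp_inv A \<star> A) = mp_inv A \<star> A"
    unfolding is_mp_inverse_def by blast+
qed


theorem theorem3p4:
  fixes R :: "('i::finite, 'h::finite) tensor"
    and S :: "('h, 'g::finite) tensor"
    and T :: "('g, 'j::finite) tensor"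
    and A :: "('i, 'j) tensor"
  assumes "A = R \<star> S \<star> T"
  shows "prod_mp_inv R A T =
           mp_inv T \<star> mp_inv (A \<star> mp_inv T) \<star> A \<star> mp_inv (mp_inv R \<star> A) \<star> mp_inv R
    \<and> (\<forall>X :: ('j, 'i) tensor.
          (X \<star> A \<star> X = X
           \<and> A \<star> X = A \<star> mp_inv (mp_inv R \<star> A) \<star> mp_inv R
           \<and> X \<star> A = mp_inv T \<star> mp_inv (A \<star> mp_inv T) \<star> A)
          \<longleftrightarrow> X = prod_mp_inv R A T)"
proof -
  define Ri where "Ri = mp_inv R"
  define Ti where "Ti = mp_inv T"
  define B where "B = Ri \<star> A \<star> Ti"
  define C where "C = Ri \<star> A"
  define D where "D = A \<star> Ti"
  define Bi where "Bi = mp_inv B"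
  define Ci where "Ci = mp_inv C"
  define Di where "Di = mp_inv D"
  define X where "X = Ti \<star> Bi \<star> Ri"
  note PR = mp_inv_props[of R, folded Ri_def]
  note PT = mp_inv_props[of T, folded Ti_def]
  note PB = mp_inv_props[of B, folded Bi_def]
  note PC = mp_inv_props[of C, folded Ci_def]
  note PD = mp_inv_props[of D, folded Di_def]
  have hA1: "R \<star> Ri \<star> A = A"
  proof -
    have "R \<star> Ri \<star> A = (R \<star> Ri \<star> R) \<star> S \<star> T" using assms by (simp add: ein_assoc)
    thus ?thesis using PR(1) assms by simp
  qed
  have hA2: "A \<star> Ti \<star> T = A"
  proof -
    have "A \<star> Ti \<star> T = R \<star> S \<star> (T \<star> Ti \<star> T)" using assms by (simp add: ein_assoc)
    thus ?thesis using PT(1) assms by simp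
  qed
  have CBT: "C = B \<star> T"
  proof -
    have "B \<star> T = Ri \<star> (A \<star> Ti \<star> T)" by (simp add: B_def ein_assoc)
    thus ?thesis using hA2 by (simp add: C_def)
  qed
  have DRB: "D = R \<star> B"
  proof -
    have "R \<star> B = (R \<star> Ri \<star> A) \<star> Ti" by (simp add: B_def ein_assoc)
    thus ?thesis using hA1 by (simp add: D_def)
  qed
  have BCT: "B = C \<star> Ti" by (simp add: B_def C_def)
  have BRD: "B = Ri \<star> D" by (simp add: B_def D_def ein_assoc)
  have CCiB: "C \<star> Ci \<star> B = B"
  proof -
    have "C \<star> Ci \<star> B = (C \<star> Ci \<star> C) \<star> Ti" using BCT by (simp add: ein_assoc)
    thus ?thesis using PC(1) BCT by simp
  qed
  have BBiC: "B \<star> Bi \<star> C = C"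
  proof -
    have "B \<star> Bi \<star> C = (B \<star> Bi \<star> B) \<star> T" using CBT by (simp add: ein_assoc)
    thus ?thesis using PB(1) CBT by simp
  qed
  have P1: "B \<star> Bi = C \<star> Ci"
  proof -
    have "B \<star> Bi = ctrans (B \<star> Bi)" using PB(3) by simp
    also have "\<dots> = ctrans (C \<star> Ci \<star> B \<star> Bi)" using CCiB by simp
    also have "\<dots> = ctrans (B \<star> Bi) \<star> ctrans (C \<star> Ci)" by (simp add: ctrans_ein ein_assoc)
    also have "\<dots> = B \<star> Bi \<star> C \<star> Ci" using PB(3) PC(3) by (simp add: ein_assoc)
    also have "\<dots> = C \<star> Ci" using BBiC by simp
    finally show ?thesis .
  qed
  have DBiB: "D \<star> Bi \<star> B = D"
  proof -
    have "D \<star> Bi \<star> B = R \<star> (B \<star> Bi \<star> B)" using DRB by (simp add: ein_assoc)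
    thus ?thesis using PB(1) DRB by simp
  qed
  have BDiD: "B \<star> Di \<star> D = B"
  proof -
    have "B \<star> Di \<star> D = Ri \<star> (D \<star> Di \<star> D)" using BRD by (simp add: ein_assoc)
    thus ?thesis using PD(1) BRD by simp
  qed
  have P2: "Di \<star> D = Bi \<star> B"
  proof -
    have "Di \<star> D = Di \<star> (D \<star> Bi \<star> B)" using DBiB by simp
    also have "\<dots> = ctrans (Di \<star> D) \<star> ctrans (Bi \<star> B)" using PD(4) PB(4) by (simp add: ein_assoc)
    also have "\<dots> = ctrans (Bi \<star> (B \<star> Di \<star> D))" by (simp add: ctrans_ein ein_assoc)
    also have "\<dots> = Bi \<star> B" using BDiD PB(4) by simp
    finally show ?thesis .
  qed
  have AX: "A \<star> X = A \<star> Ci \<star> Ri"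
  proof -
    have "A \<star> X = D \<star> Bi \<star> Ri" by (simp add: X_def D_def ein_assoc)
    also have "\<dots> = R \<star> (B \<star> Bi) \<star> Ri" using DRB by (simp add: ein_assoc)
    also have "\<dots> = (R \<star> Ri \<star> A) \<star> Ci \<star> Ri" using P1 by (simp add: C_def ein_assoc)
    also have "\<dots> = A \<star> Ci \<star> Ri" using hA1 by simp
    finally show ?thesis .
  qed
  have XA0: "X \<star> A = Ti \<star> (Bi \<star> B) \<star> T"
  proof -
    have "X \<star> A = Ti \<star> Bi \<star> C" by (simp add: X_def C_def ein_assoc)
    thus ?thesis using CBT by (simp add: ein_assoc)
  qed
  have XA: "X \<star> A = Ti \<star> Di \<star> A"
  proof -
    have "X \<star> A = Ti \<star> (Di \<star> D) \<star> T" using XA0 P2 by simp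
    also have "\<dots> = Ti \<star> Di \<star> (A \<star> Ti \<star> T)" by (simp add: D_def ein_assoc)
    also have "\<dots> = Ti \<star> Di \<star> A" using hA2 by simp
    finally show ?thesis .
  qed
  have BTTi: "B \<star> T \<star> Ti = B" using CBT BCT by simp
  have XAX: "X \<star> A \<star> X = X"
  proof -
    have "X \<star> A \<star> X = Ti \<star> Bi \<star> (B \<star> T \<star> Ti) \<star> Bi \<star> Ri" using XA0 by (simp add: X_def ein_assoc)
    also have "\<dots> = Ti \<star> (Bi \<star> B \<star> Bi) \<star> Ri" using BTTi by (simp add: ein_assoc)
    also have "\<dots> = X" using PB(2) by (simp add: X_def)
    finally show ?thesis .
  qed
  have first: "X = Ti \<star> Di \<star> A \<star> Ci \<star> Ri"
  proof -
    have "X = (X \<star> A) \<star> X" using XAX by simp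
    also have "\<dots> = Ti \<star> Di \<star> (A \<star> X)" using XA by (simp add: ein_assoc)
    also have "\<dots> = Ti \<star> Di \<star> A \<star> Ci \<star> Ri" using AX by (simp add: ein_assoc)
    finally show ?thesis .
  qed
  have second: "(Y \<star> A \<star> Y = Y \<and> A \<star> Y = A \<star> Ci \<star> Ri \<and> Y \<star> A = Ti \<star> Di \<star> A) \<longleftrightarrow> Y = X" for Y
  proof
    assume H: "Y \<star> A \<star> Y = Y \<and> A \<star> Y = A \<star> Ci \<star> Ri \<and> Y \<star> A = Ti \<star> Di \<star> A"
    have hYA: "Y \<star> A = X \<star> A" using H XA by simp
    have hAY: "A \<star> Y = A \<star> X" using H AX by simp
    have "Y = (Y \<star> A) \<star> Y" using conjunct1[OF H] by (rule sym)
    also have "\<dots> = (X \<star> A) \<star> Y" by (simp only: hYA)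
    also have "\<dots> = X \<star> (A \<star> Y)" by (rule ein_assoc)
    also have "\<dots> = X \<star> (A \<star> X)" by (simp only: hAY)
    also have "\<dots> = X \<star> A \<star> X" by (simp only: ein_assoc)
    also have "\<dots> = X" using XAX .
    finally show "Y = X" .
  next
    assume "Y = X"
    thus "Y \<star> A \<star> Y = Y \<and> A \<star> Y = A \<star> Ci \<star> Ri \<and> Y \<star> A = Ti \<star> Di \<star> A"
      using XAX AX XA by simp
  qed
  have pX: "prod_mp_inv R A T = X"
    by (simp add: prod_mp_inv_def X_def Ti_def Bi_def B_def Ri_def)
  show ?thesis
    unfolding pX using first second
    by (simp add: Ti_def Di_def D_def Ci_def C_def Ri_def)
qed

end
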